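(* Let $V$ be a countable set, $\Omega_0$ a finite set, $\Omega=\Omega_0^V$ with product $\sigma$-algebra $\mathcal F$, $q\in\mathbb N$, and let $\gamma=(\gamma_\Lambda)_{\Lambda\Subset V}$ be a $q$-specification satisfying Assumption 1. For $\Lambda\Subset V$ let $V_{q,\Lambda}:\mathcal M_1(\Omega,\mathcal F)\to\mathcal M_1(\Omega,\mathcal F)$ be given by $V_{q,\Lambda}(\lambda)(A)=\int_{\Omega^q}\gamma_\Lambda(A\mid\sigma_1,\dots,\sigma_q)\prod_{i=1}^q\lambda(d\sigma_i)$, $A\in\mathcal F$. Then $$\mathcal G_q(\gamma)=\bigcap_{\Lambda\Subset V}\mathrm{Im}(V_{q,\Lambda}).$$
   Context: $\mathcal M_1(\Omega,\mathcal F)$ is the set of probability measures on $(\Omega,\mathcal F)$; $\mathrm{Im}$ denotes the image. $\mathcal F_\Delta$ is generated by coordinates in $\Delta$; $\mathcal F^q_{\Lambda^c}=(\mathcal F_{\Lambda^c})^{\otimes q}$. A probability $q$-kernel is a map $\gamma_\Lambda:\mathcal F\times\Omega^q\to[0,1]$ with $\gamma_\Lambda(\cdot\mid\eta_1,\dots,\eta_q)$ a probability measure and $\gamma_\Lambda(A\mid\cdot)$ $\mathcal F^q_{\Lambda^c}$-measurable; proper means $\gamma_\Lambda(A\mid\eta_1,\dots,\eta_q)=\frac1q\sum_i\mathbf 1_A(\eta_i)$ for $A\in\mathcal F_{\Lambda^c}$. Composition: $(\gamma_\Delta\gamma_\Lambda)(A\mid\eta)=\int_{\Omega^q}\gamma_\Lambda(A\mid\zeta_1,\dots,\zeta_q)\prod_i\gamma_\Delta(d\zeta_i\mid\eta)$.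 A $q$-specification is a family of proper probability $q$-kernels with $\gamma_\Delta\gamma_\Lambda=\gamma_\Delta$ for $\Lambda\subset\Delta\Subset V$. $\mathcal G_q(\gamma)$ is the set of $\mu\in\mathcal M_1(\Omega,\mathcal F)$ with $V_{q,\Lambda}(\mu)=\mu$ for all $\Lambda\Subset V$. Assumption 1: for each $\Lambda\Subset V$ there is a measurable $\tilde\gamma_\Lambda:\mathcal F\times\mathcal M_1(\Omega)\to[0,1]$ with $\gamma_\Lambda(A\mid\sigma_1,\dots,\sigma_q)=\tilde\gamma_\Lambda\big(A;\frac1q\sum_{i=1}^q\delta_{\sigma_i}\big)$ for all $A,\sigma_1,\dots,\sigma_q$. *)

theory Defs
  imports "HOL-Probability.Probability"
begin

text \<open>Configuration space Omega = Omega0^V with the product sigma-algebra F.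
  V is the index type 'v (countable), Omega0 is the finite type 'a.\<close>
definition cfg :: "('v \<Rightarrow> 'a) measure" where
  "cfg = PiM UNIV (\<lambda>_. count_space UNIV)"

definition M1 :: "('v \<Rightarrow> 'a) measure set" where
  "M1 = {\<mu>. prob_space \<mu> \<and> sets \<mu> = sets (cfg :: ('v \<Rightarrow> 'a) measure)}"

definition Fsub :: "'v set \<Rightarrow> ('v \<Rightarrow> 'a) measure" where
  "Fsub D = vimage_algebra (space cfg) (\<lambda>\<omega>. restrict \<omega> D) (PiM D (\<lambda>_. count_space UNIV))"

definition qpow :: "nat \<Rightarrow> 'b measure \<Rightarrow> (nat \<Rightarrow> 'b) measure" where
  "qpow q M = PiM {..<q} (\<lambda>_. M)"

text \<open>A probability q-kernel gamma_Lambda, represented as eta \<mapsto> gamma_Lambda(. | eta).\<close>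
definition prob_q_kernel :: "nat \<Rightarrow> 'v set \<Rightarrow> ((nat \<Rightarrow> 'v \<Rightarrow> 'a) \<Rightarrow> ('v \<Rightarrow> 'a) measure) \<Rightarrow> bool" where
  "prob_q_kernel q L k \<longleftrightarrow>
     (\<forall>\<eta>\<in>space (qpow q cfg). prob_space (k \<eta>) \<and> sets (k \<eta>) = sets cfg) \<and>
     (\<forall>A\<in>sets cfg. (\<lambda>\<eta>. measure (k \<eta>) A) \<in> borel_measurable (qpow q (Fsub (- L))))"

definition proper_q_kernel :: "nat \<Rightarrow> 'v set \<Rightarrow> ((nat \<Rightarrow> 'v \<Rightarrow> 'a) \<Rightarrow> ('v \<Rightarrow> 'a) measure) \<Rightarrow> bool" where
  "proper_q_kernel q L k \<longleftrightarrow>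
     (\<forall>A\<in>sets (Fsub (- L)). \<forall>\<eta>\<in>space (qpow q cfg).
        measure (k \<eta>) A = (1 / real q) * (\<Sum>i<q. indicator A (\<eta> i)))"

definition kcomp :: "nat \<Rightarrow> ((nat \<Rightarrow> 'v \<Rightarrow> 'a) \<Rightarrow> ('v \<Rightarrow> 'a) measure)
      \<Rightarrow> ((nat \<Rightarrow> 'v \<Rightarrow> 'a) \<Rightarrow> ('v \<Rightarrow> 'a) measure) \<Rightarrow> ('v \<Rightarrow> 'a) set \<Rightarrow> (nat \<Rightarrow> 'v \<Rightarrow> 'a) \<Rightarrow> real" where
  "kcomp q kD kL A \<eta> = (\<integral>\<zeta>. measure (kL \<zeta>) A \<partial>(PiM {..<q} (\<lambda>_. kD \<eta>)))"

definition q_specification :: "nat \<Rightarrow> ('v set \<Rightarrow> (nat \<Rightarrow> 'v \<Rightarrow> 'a) \<Rightarrow> ('v \<Rightarrow> 'a) measure) \<Rightarrow> bool" where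
  "q_specification q \<gamma> \<longleftrightarrow>
     (\<forall>L. finite L \<longrightarrow> prob_q_kernel q L (\<gamma> L) \<and> proper_q_kernel q L (\<gamma> L)) \<and>
     (\<forall>L D. finite D \<longrightarrow> L \<subseteq> D \<longrightarrow>
        (\<forall>A\<in>sets cfg. \<forall>\<eta>\<in>space (qpow q cfg). kcomp q (\<gamma> D) (\<gamma> L) A \<eta> = measure (\<gamma> D \<eta>) A))"

text \<open>Empirical measure (1/q) sum_i delta_{sigma_i}.\<close>
definition empirical :: "nat \<Rightarrow> (nat \<Rightarrow> 'v \<Rightarrow> 'a) \<Rightarrow> ('v \<Rightarrow> 'a) measure" where
  "empirical q \<sigma> = distr (uniform_count_measure {..<q}) cfg \<sigma>"

text \<open>Assumption 1: gamma_Lambda(A | sigma) depends on sigma only through the empirical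
  measure, via a function gt : F x M_1(Omega) -> [0,1], measurable in the measure argument
  (w.r.t. the Giry sigma-algebra on M_1(Omega)).\<close>
definition assumption1 :: "nat \<Rightarrow> ('v set \<Rightarrow> (nat \<Rightarrow> 'v \<Rightarrow> 'a) \<Rightarrow> ('v \<Rightarrow> 'a) measure) \<Rightarrow> bool" where
  "assumption1 q \<gamma> \<longleftrightarrow>
     (\<forall>L. finite L \<longrightarrow>
       (\<exists>gt :: ('v \<Rightarrow> 'a) set \<Rightarrow> ('v \<Rightarrow> 'a) measure \<Rightarrow> real.
          (\<forall>A\<in>sets cfg. gt A \<in> borel_measurable (prob_algebra cfg)) \<and>
          (\<forall>A\<in>sets cfg. \<forall>m\<in>space (prob_algebra cfg). 0 \<le> gt A m \<and> gt A m \<le> 1) \<and>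
          (\<forall>A\<in>sets cfg. \<forall>\<sigma>\<in>space (qpow q cfg). measure (\<gamma> L \<sigma>) A = gt A (empirical q \<sigma>))))"

definition Vmap :: "nat \<Rightarrow> ('v set \<Rightarrow> (nat \<Rightarrow> 'v \<Rightarrow> 'a) \<Rightarrow> ('v \<Rightarrow> 'a) measure) \<Rightarrow> 'v set
      \<Rightarrow> ('v \<Rightarrow> 'a) measure \<Rightarrow> ('v \<Rightarrow> 'a) measure" where
  "Vmap q \<gamma> L m = measure_of (space cfg) (sets cfg)
      (\<lambda>A. ennreal (\<integral>\<sigma>. measure (\<gamma> L \<sigma>) A \<partial>(PiM {..<q} (\<lambda>_. m))))"

definition Gq :: "nat \<Rightarrow> ('v set \<Rightarrow> (nat \<Rightarrow> 'v \<Rightarrow> 'a) \<Rightarrow> ('v \<Rightarrow> 'a) measure) \<Rightarrow> ('v \<Rightarrow> 'a) measure set" where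
  "Gq q \<gamma> = {\<mu>\<in>M1. \<forall>L. finite L \<longrightarrow> Vmap q \<gamma> L \<mu> = \<mu>}"

end

theory Submission
  imports Defs "HOL-Probability.Probability"
begin

lemma Fsub_subalg:
  assumes "sets M = sets (cfg :: ('v \<Rightarrow> 'a) measure)"
  shows "subalgebra M (Fsub D :: ('v \<Rightarrow> 'a) measure)"
proof -
  have sp: "space M = space (cfg :: ('v \<Rightarrow> 'a) measure)"
    using assms sets_eq_imp_space_eq by blast
  have m: "(\<lambda>\<omega>. restrict \<omega> D) \<in> measurable (cfg :: ('v \<Rightarrow> 'a) measure) (PiM D (\<lambda>_. count_space UNIV))"
    unfolding cfg_def by (rule measurable_restrict_subset) auto
  have "sets (Fsub D :: ('v \<Rightarrow> 'a) measure) \<subseteq> sets (cfg :: ('v \<Rightarrow> 'a) measure)"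
    unfolding Fsub_def
    using measurable_space[OF m] measurable_sets[OF m]
    by (subst sets_vimage_algebra2) auto
  then show ?thesis unfolding subalgebra_def Fsub_def using sp assms by simp
qed

lemma meas_id:
  assumes "subalgebra M F"
  shows "(\<lambda>x. x) \<in> measurable (PiM I (\<lambda>_. M)) (PiM I (\<lambda>_. F))"
proof -
  have "(\<lambda>\<omega> i. (\<lambda>x. x i) \<omega>) \<in> measurable (PiM I (\<lambda>_. M)) (PiM I (\<lambda>_. F))"
  proof (rule measurable_PiM_single')
    fix i assume "i \<in> I"
    have "(\<lambda>x. x i) \<in> measurable (PiM I (\<lambda>_. M)) M"
      using \<open>i \<in> I\<close> by (rule measurable_component_singleton)
    then show "(\<lambda>x. x i) \<in> measurable (PiM I (\<lambda>_. M)) F"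
      using assms unfolding subalgebra_def measurable_def by auto
  next
    show "(\<lambda>\<omega> i. \<omega> i) \<in> space (PiM I (\<lambda>_. M)) \<rightarrow> (\<Pi>\<^sub>E i\<in>I. space F)"
      using assms unfolding subalgebra_def by (auto simp: space_PiM)
  qed
  then show ?thesis by simp
qed

lemma key:
  fixes f :: "_ \<Rightarrow> real"
  assumes sub: "subalgebra M F" and P: "prob_space M" and I: "finite I"
    and f: "f \<in> borel_measurable (PiM I (\<lambda>_. F))"
  shows "(\<integral>x. f x \<partial>PiM I (\<lambda>_. M)) = (\<integral>x. f x \<partial>PiM I (\<lambda>_. restr_to_subalg M F))"
proof -
  let ?R = "restr_to_subalg M F"
  have pR: "prob_space ?R" using prob_space_restr_to_subalg[OF sub P] .
  interpret product_sigma_finite "\<lambda>_. ?R"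
    by (rule product_sigma_finite.intro) (rule prob_space_imp_sigma_finite[OF pR])
  interpret pM: product_sigma_finite "\<lambda>_. M"
    by (rule product_sigma_finite.intro) (rule prob_space_imp_sigma_finite[OF P])
  have sR: "sets ?R = sets F" using sets_restr_to_subalg[OF sub] .
  have mid: "(\<lambda>x. x) \<in> measurable (PiM I (\<lambda>_. M)) (PiM I (\<lambda>_. F))" by (rule meas_id[OF sub])
  have eq: "distr (PiM I (\<lambda>_. M)) (PiM I (\<lambda>_. F)) (\<lambda>x. x) = PiM I (\<lambda>_. ?R)"
  proof (rule PiM_eqI[OF I])
    show "sets (distr (PiM I (\<lambda>_. M)) (PiM I (\<lambda>_. F)) (\<lambda>x. x)) = sets (PiM I (\<lambda>_. ?R))"
      by (subst sets_distr) (rule sets_PiM_cong, auto simp: sR)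
  next
    fix A assume A: "\<And>i. i \<in> I \<Longrightarrow> A i \<in> sets ?R"
    then have AF: "\<And>i. i \<in> I \<Longrightarrow> A i \<in> sets F" using sR by auto
    then have AM: "\<And>i. i \<in> I \<Longrightarrow> A i \<in> sets M" using sub unfolding subalgebra_def by auto
    have PF: "Pi\<^sub>E I A \<in> sets (PiM I (\<lambda>_. F))" using AF by (auto intro: sets_PiM_I_finite I)
    have "emeasure (distr (PiM I (\<lambda>_. M)) (PiM I (\<lambda>_. F)) (\<lambda>x. x)) (Pi\<^sub>E I A)
        = emeasure (PiM I (\<lambda>_. M)) ((\<lambda>x. x) -` Pi\<^sub>E I A \<inter> space (PiM I (\<lambda>_. M)))"
      using emeasure_distr[OF mid PF] .
    also have "(\<lambda>x. x) -` Pi\<^sub>E I A \<inter> space (PiM I (\<lambda>_. M)) = Pi\<^sub>E I A"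
      using AM[THEN sets.sets_into_space] by (force simp: space_PiM PiE_iff)
    also have "emeasure (PiM I (\<lambda>_. M)) (Pi\<^sub>E I A) = (\<Prod>i\<in>I. emeasure M (A i))"
      using AM I by (simp add: pM.emeasure_PiM)
    also have "\<dots> = (\<Prod>i\<in>I. emeasure ?R (A i))"
      using AF emeasure_restr_to_subalg[OF sub] by simp
    finally show "emeasure (distr (PiM I (\<lambda>_. M)) (PiM I (\<lambda>_. F)) (\<lambda>x. x)) (Pi\<^sub>E I A) = (\<Prod>i\<in>I. emeasure ?R (A i))" .
  qed
  have "(\<integral>x. f x \<partial>PiM I (\<lambda>_. ?R)) = (\<integral>x. f x \<partial>distr (PiM I (\<lambda>_. M)) (PiM I (\<lambda>_. F)) (\<lambda>x. x))"
    using eq by simp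
  also have "\<dots> = (\<integral>x. f x \<partial>PiM I (\<lambda>_. M))"
    using integral_distr[OF mid f] by simp
  finally show ?thesis by simp
qed

lemma M1_facts:
  assumes "lam \<in> M1"
  shows "prob_space lam" "sets lam = sets cfg" "space lam = space cfg"
  using assms sets_eq_imp_space_eq unfolding M1_def by auto

lemma kern_meas:
  fixes \<gamma> :: "'v set \<Rightarrow> (nat \<Rightarrow> 'v \<Rightarrow> 'a) \<Rightarrow> ('v \<Rightarrow> 'a) measure"
  assumes lam: "lam \<in> M1" and k: "prob_q_kernel q L (\<gamma> L)" and A: "A \<in> sets cfg"
  shows "(\<lambda>\<sigma>. measure (\<gamma> L \<sigma>) A) \<in> borel_measurable (PiM {..<q} (\<lambda>_. lam))"
proof -
  have sub: "subalgebra lam (Fsub (- L))" using Fsub_subalg M1_facts[OF lam] by blast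
  have "(\<lambda>\<sigma>. measure (\<gamma> L \<sigma>) A) \<in> borel_measurable (qpow q (Fsub (- L)))"
    using k A unfolding prob_q_kernel_def by blast
  then have f: "(\<lambda>\<sigma>. measure (\<gamma> L \<sigma>) A) \<in> borel_measurable (PiM {..<q} (\<lambda>_. Fsub (- L)))"
    unfolding qpow_def .
  have mid: "(\<lambda>x. x) \<in> measurable (PiM {..<q} (\<lambda>_. lam)) (PiM {..<q} (\<lambda>_. Fsub (- L)))"
    by (rule meas_id[OF sub])
  show ?thesis using measurable_compose[OF mid f] by simp
qed

lemma space_P:
  assumes lam: "lam \<in> M1"
  shows "space (PiM {..<q} (\<lambda>_. lam)) = space (qpow q cfg)"
  unfolding qpow_def using M1_facts[OF lam] by (simp add: space_PiM)

lemma Vmap_bind: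
  fixes \<gamma> :: "'v set \<Rightarrow> (nat \<Rightarrow> 'v \<Rightarrow> 'a) \<Rightarrow> ('v \<Rightarrow> 'a) measure"
  assumes lam: "lam \<in> M1" and k: "prob_q_kernel q L (\<gamma> L)"
  shows "Vmap q \<gamma> L lam = bind (PiM {..<q} (\<lambda>_. lam)) (\<gamma> L)"
    and "Vmap q \<gamma> L lam \<in> M1"
    and "\<And>A. A \<in> sets cfg \<Longrightarrow> emeasure (Vmap q \<gamma> L lam) A
           = ennreal (\<integral>\<sigma>. measure (\<gamma> L \<sigma>) A \<partial>PiM {..<q} (\<lambda>_. lam))"
proof -
  let ?P = "PiM {..<q} (\<lambda>_. lam)"
  have pl: "prob_space lam" using M1_facts[OF lam] by simp
  have pP: "prob_space ?P" by (rule prob_space_PiM) (use pl in auto)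
  have spP: "space ?P \<noteq> {}" using prob_space.not_empty[OF pP] .
  have kk: "\<And>\<eta>. \<eta> \<in> space ?P \<Longrightarrow> prob_space (\<gamma> L \<eta>) \<and> sets (\<gamma> L \<eta>) = sets cfg"
    using k space_P[OF lam] unfolding prob_q_kernel_def by auto
  have mA: "\<And>A. A \<in> sets cfg \<Longrightarrow> (\<lambda>\<sigma>. measure (\<gamma> L \<sigma>) A) \<in> borel_measurable ?P"
    using kern_meas[where \<gamma>=\<gamma>, OF lam k] by blast
  have Km: "\<gamma> L \<in> measurable ?P (subprob_algebra cfg)"
  proof (rule measurable_subprob_algebra)
    fix a assume "a \<in> space ?P"
    then show "subprob_space (\<gamma> L a)" "sets (\<gamma> L a) = sets cfg"
      using kk prob_space_imp_subprob_space by auto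
  next
    fix A assume A: "A \<in> sets (cfg :: ('v \<Rightarrow> 'a) measure)"
    have "(\<lambda>a. ennreal (measure (\<gamma> L a) A)) \<in> borel_measurable ?P"
      using mA[OF A] by measurable
    then show "(\<lambda>a. emeasure (\<gamma> L a) A) \<in> borel_measurable ?P"
      by (rule measurable_cong[THEN iffD1, rotated])
         (use kk in \<open>auto simp: finite_measure.emeasure_eq_measure prob_space.axioms(1)\<close>)
  qed
  have sb: "sets (bind ?P (\<gamma> L)) = sets cfg" using kk spP by (intro sets_bind) auto
  have spb: "space (bind ?P (\<gamma> L)) = space cfg" using kk spP by (intro space_bind) auto
  have em: "emeasure (bind ?P (\<gamma> L)) A = ennreal (\<integral>\<sigma>. measure (\<gamma> L \<sigma>) A \<partial>?P)"
    if A: "A \<in> sets cfg" for A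
  proof -
    have "emeasure (bind ?P (\<gamma> L)) A = (\<integral>\<^sup>+\<sigma>. emeasure (\<gamma> L \<sigma>) A \<partial>?P)"
      by (rule emeasure_bind[OF spP Km A])
    also have "\<dots> = (\<integral>\<^sup>+\<sigma>. ennreal (measure (\<gamma> L \<sigma>) A) \<partial>?P)"
      by (rule nn_integral_cong) (use kk in \<open>auto simp: finite_measure.emeasure_eq_measure prob_space.axioms(1)\<close>)
    also have "\<dots> = ennreal (\<integral>\<sigma>. measure (\<gamma> L \<sigma>) A \<partial>?P)"
    proof (rule nn_integral_eq_integral)
      interpret prob_space ?P by (rule pP)
      show "integrable ?P (\<lambda>\<sigma>. measure (\<gamma> L \<sigma>) A)"
        by (rule integrable_const_bound[where B=1]) (use kk in \<open>auto intro!: mA[OF A] AE_I2 prob_space.prob_le_1\<close>)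
    qed auto
    finally show ?thesis .
  qed
  have "Vmap q \<gamma> L lam = measure_of (space cfg) (sets cfg) (emeasure (bind ?P (\<gamma> L)))"
    unfolding Vmap_def
    by (rule measure_of_eq) (auto simp: sets.space_closed sets.sigma_sets_eq em)
  also have "\<dots> = bind ?P (\<gamma> L)"
    using measure_of_of_measure[of "bind ?P (\<gamma> L)"] sb spb by simp
  finally show eqb: "Vmap q \<gamma> L lam = bind ?P (\<gamma> L)" .
  have "prob_space (bind ?P (\<gamma> L))"
  proof (rule prob_space_bind')
    show "?P \<in> space (prob_algebra ?P)" using pP by (simp add: space_prob_algebra)
    show "\<gamma> L \<in> ?P \<rightarrow>\<^sub>M prob_algebra cfg"
      by (rule measurable_prob_algebraI) (use kk Km in auto)
  qed
  then show "Vmap q \<gamma> L lam \<in> M1" using eqb sb unfolding M1_def by simp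
  show "\<And>A. A \<in> sets cfg \<Longrightarrow> emeasure (Vmap q \<gamma> L lam) A
           = ennreal (\<integral>\<sigma>. measure (\<gamma> L \<sigma>) A \<partial>PiM {..<q} (\<lambda>_. lam))"
    using eqb em by simp
qed

lemma Vmap_outer:
  fixes \<gamma> :: "'v set \<Rightarrow> (nat \<Rightarrow> 'v \<Rightarrow> 'a) \<Rightarrow> ('v \<Rightarrow> 'a) measure"
  assumes lam: "lam \<in> M1" and k: "prob_q_kernel q L (\<gamma> L)" and p: "proper_q_kernel q L (\<gamma> L)"
    and q: "q \<ge> 1" and B: "B \<in> sets (Fsub (- L) :: ('v \<Rightarrow> 'a) measure)"
  shows "emeasure (Vmap q \<gamma> L lam) B = emeasure lam B"
proof -
  let ?P = "PiM {..<q} (\<lambda>_. lam)"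
  have pl: "prob_space lam" using M1_facts[OF lam] by simp
  have pP: "prob_space ?P" by (rule prob_space_PiM) (use pl in auto)
  have BC: "B \<in> sets cfg"
    using B Fsub_subalg[of "cfg :: ('v \<Rightarrow> 'a) measure" "- L"] unfolding subalgebra_def by auto
  have BL: "B \<in> sets lam" using BC M1_facts[OF lam] by simp
  have comp: "(\<integral>\<sigma>. indicator B (\<sigma> i) \<partial>?P) = measure lam B" if i: "i < q" for i
  proof -
    have "(\<integral>\<sigma>. indicator B (\<sigma> i) \<partial>?P) = (\<integral>x. indicator B x \<partial>distr ?P lam (\<lambda>\<sigma>. \<sigma> i) :: real)"
    proof -
      have bi: "(\<lambda>x. indicator B x :: real) \<in> borel_measurable lam" using BL by simp
      show ?thesis
        using integral_distr[OF measurable_component_singleton[of i "{..<q}" "\<lambda>_. lam"] bi] i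
        by (metis (no_types) lessThan_iff)
    qed
    also have "distr ?P lam (\<lambda>\<sigma>. \<sigma> i) = lam"
      by (rule distr_PiM_component) (use pl i in auto)
    also have "(\<integral>x. indicator B x \<partial>lam) = measure lam B"
      using BL pl by (simp add: prob_space.emeasure_space_1 finite_measure.emeasure_finite prob_space.axioms(1))
    finally show ?thesis .
  qed
  have integ: "integrable ?P (\<lambda>\<sigma>. indicator B (\<sigma> i) :: real)" if i: "i < q" for i
  proof -
    interpret prob_space ?P by (rule pP)
    show ?thesis
      by (rule integrable_const_bound[where B=1]) (use i BL in auto)
  qed
  have "(\<integral>\<sigma>. measure (\<gamma> L \<sigma>) B \<partial>?P) = (\<integral>\<sigma>. (1 / real q) * (\<Sum>i<q. indicator B (\<sigma> i)) \<partial>?P)"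
    by (rule Bochner_Integration.integral_cong[OF refl]) (use p B space_P[OF lam] in \<open>auto simp: proper_q_kernel_def\<close>)
  also have "\<dots> = (1 / real q) * (\<Sum>i<q. (\<integral>\<sigma>. indicator B (\<sigma> i) \<partial>?P))"
    using integ by (simp add: integral_sum)
  also have "\<dots> = measure lam B" using comp q by simp
  finally have "(\<integral>\<sigma>. measure (\<gamma> L \<sigma>) B \<partial>?P) = measure lam B" .
  then show ?thesis
    using Vmap_bind(3)[where \<gamma>=\<gamma>, OF lam k BC] pl
    by (simp add: finite_measure.emeasure_eq_measure prob_space.axioms(1))
qed

theorem mainTheorem10:
  fixes q :: nat
    and \<gamma> :: "'v::countable set \<Rightarrow> (nat \<Rightarrow> 'v \<Rightarrow> 'a::finite) \<Rightarrow> ('v \<Rightarrow> 'a) measure"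
  assumes "q \<ge> 1"
    and "q_specification q \<gamma>"
    and "assumption1 q \<gamma>"
  shows "Gq q \<gamma> = (\<Inter>L\<in>{L. finite L}. Vmap q \<gamma> L ` M1)"
proof
  show "Gq q \<gamma> \<subseteq> (\<Inter>L\<in>{L. finite L}. Vmap q \<gamma> L ` M1)"
    unfolding Gq_def by (auto intro!: image_eqI[where x=\<mu> for \<mu>])
next
  have kL: "\<And>L. finite L \<Longrightarrow> prob_q_kernel q L (\<gamma> L) \<and> proper_q_kernel q L (\<gamma> L)"
    using assms(2) unfolding q_specification_def by blast
  show "(\<Inter>L\<in>{L. finite L}. Vmap q \<gamma> L ` M1) \<subseteq> Gq q \<gamma>"
  proof
    fix \<mu> assume mu: "\<mu> \<in> (\<Inter>L\<in>{L. finite L}. Vmap q \<gamma> L ` M1)"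
    obtain l0 where l0: "l0 \<in> M1" "\<mu> = Vmap q \<gamma> {} l0" using mu by auto
    have muM: "\<mu> \<in> M1" using Vmap_bind(2)[where \<gamma>=\<gamma>, OF l0(1)] kL[of "{}"] l0(2) by auto
    have "Vmap q \<gamma> L \<mu> = \<mu>" if L: "finite L" for L
    proof -
      obtain lam where lam: "lam \<in> M1" "\<mu> = Vmap q \<gamma> L lam" using mu L by auto
      have k: "prob_q_kernel q L (\<gamma> L)" and p: "proper_q_kernel q L (\<gamma> L)" using kL[OF L] by auto
      let ?F = "Fsub (- L) :: ('v \<Rightarrow> 'a) measure"
      have subm: "subalgebra \<mu> ?F" using Fsub_subalg M1_facts[OF muM] by blast
      have subl: "subalgebra lam ?F" using Fsub_subalg M1_facts[OF lam(1)] by blast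
      have spF: "space ?F = space cfg" by (simp add: Fsub_def)
      have ss: "sigma_sets (space cfg) (sets ?F) = sets ?F" using sets.sigma_sets_eq[of ?F] spF by simp
      have cl: "sets ?F \<subseteq> Pow (space cfg)" using sets.space_closed[of ?F] spF by simp
      have "measure_of (space cfg) (sets ?F) (emeasure \<mu>) = measure_of (space cfg) (sets ?F) (emeasure lam)"
        by (rule measure_of_eq[OF cl])
          (use ss Vmap_outer[where \<gamma>=\<gamma>, OF lam(1) k p assms(1)] lam(2) in simp)
      then have rr: "restr_to_subalg \<mu> ?F = restr_to_subalg lam ?F"
        unfolding restr_to_subalg_def
        using M1_facts(3)[OF muM] M1_facts(3)[OF lam(1)] by simp
      have ii: "(\<integral>\<sigma>. measure (\<gamma> L \<sigma>) A \<partial>PiM {..<q} (\<lambda>_. \<mu>))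
              = (\<integral>\<sigma>. measure (\<gamma> L \<sigma>) A \<partial>PiM {..<q} (\<lambda>_. lam))" if A: "A \<in> sets cfg" for A
      proof -
        have fm: "(\<lambda>\<sigma>. measure (\<gamma> L \<sigma>) A) \<in> borel_measurable (PiM {..<q} (\<lambda>_. ?F))"
          using k A unfolding prob_q_kernel_def qpow_def by blast
        show ?thesis
          using key[OF subm M1_facts(1)[OF muM] _ fm] key[OF subl M1_facts(1)[OF lam(1)] _ fm] rr
          by simp
      qed
      have "Vmap q \<gamma> L \<mu> = Vmap q \<gamma> L lam"
        unfolding Vmap_def
        by (rule measure_of_eq) (auto simp: sets.space_closed sets.sigma_sets_eq ii)
      then show ?thesis using lam(2) by simp
    qed
    then show "\<mu> \<in> Gq q \<gamma>" unfolding Gq_def using muM by auto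
  qed
qed

end
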